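(* For every $\epsilon>0$ there exists a constant $C>0$ such that the following holds. Let $d\in\mathbb{N}$ with $d\ge C$, let $G$ be a $d$-regular graph on $n$ vertices, and let $p\in[0,1]$ with $p\ge \frac{C}{d}$. Then, with probability tending to one as $n\to\infty$, there exists a matching in $G_p$ covering at least $(1-\epsilon)n$ vertices.
   Context: Given a graph $G$ and $p\in[0,1]$, the random subgraph $G_p$ is the spanning subgraph of $G$ obtained by retaining each edge of $G$ independently with probability $p$. *)

theory Defs
  imports "HOL-Probability.Probability"
begin

definition simple_graph :: "nat \<Rightarrow> nat set set \<Rightarrow> bool" where
  "simple_graph n E \<longleftrightarrow> (\<forall>e\<in>E. e \<subseteq> {..<n} \<and> card e = 2)"

definition regular_graph :: "nat \<Rightarrow> nat \<Rightarrow> nat set set \<Rightarrow> bool" where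
  "regular_graph n d E \<longleftrightarrow> simple_graph n E \<and> (\<forall>v\<in>{..<n}. card {e\<in>E. v \<in> e} = d)"

definition is_matching :: "nat set set \<Rightarrow> nat set set \<Rightarrow> bool" where
  "is_matching E M \<longleftrightarrow> M \<subseteq> E \<and> (\<forall>e\<in>M. \<forall>f\<in>M. e \<noteq> f \<longrightarrow> e \<inter> f = {})"

text \<open>The random subgraph G_p: each edge kept independently with probability p;
  an outcome is the indicator function of the kept edges (extensional outside E).\<close>
definition random_subgraph :: "nat set set \<Rightarrow> real \<Rightarrow> (nat set \<Rightarrow> bool) pmf" where
  "random_subgraph E p = Pi_pmf E False (\<lambda>_. bernoulli_pmf p)"

definition prob_large_matching :: "nat \<Rightarrow> nat set set \<Rightarrow> real \<Rightarrow> real \<Rightarrow> real" where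
  "prob_large_matching n E p eps =
     measure_pmf.prob (random_subgraph E p)
       {keep. \<exists>M. is_matching {e\<in>E. keep e} M \<and> real (card (\<Union>M)) \<ge> (1 - eps) * real n}"

end

theory Submission
  imports Defs
begin

lemma hall:
  assumes "finite A" "\<forall>a\<in>A. finite (N a)" "\<forall>X\<subseteq>A. card X \<le> card (\<Union>(N ` X))"
  shows "\<exists>f. inj_on f A \<and> (\<forall>a\<in>A. f a \<in> N a)"
  using assms
proof (induction "card A" arbitrary: A N rule: less_induct)
  case less
  show ?case
  proof (cases "A = {}")
    case True thus ?thesis by auto
  next
    case False
    show ?thesis
    proof (cases "\<exists>X. X \<subseteq> A \<and> X \<noteq> {} \<and> X \<noteq> A \<and> card (\<Union>(N`X)) \<le> card X")
      case True
      then obtain X where X: "X \<subseteq> A" "X \<noteq> {}" "X \<noteq> A" "card (\<Union>(N`X)) \<le> card X" by blast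
      have fX: "finite X" using X less.prems finite_subset by blast
      have "card X < card A" using X less.prems(1) psubset_card_mono by blast
      moreover have "\<forall>Y\<subseteq>X. card Y \<le> card (\<Union>(N ` Y))" using X less.prems by auto
      ultimately obtain f1 where f1: "inj_on f1 X" "\<forall>a\<in>X. f1 a \<in> N a"
        using less.hyps[of X N] X less.prems fX by auto
      define R where "R = \<Union>(N`X)"
      define N2 where "N2 = (\<lambda>a. N a - R)"
      have "A - X \<subset> A" using X by blast
      hence lt2: "card (A - X) < card A" by (rule psubset_card_mono[OF less.prems(1)])
      have cond2: "\<forall>Z\<subseteq>A-X. card Z \<le> card (\<Union>(N2`Z))"
      proof (intro allI impI)
        fix Z assume Z: "Z \<subseteq> A - X"
        have fin: "finite Z" using Z less.prems(1) finite_subset by blast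
        have "Z \<union> X \<subseteq> A" using Z X by auto
        hence "card (Z \<union> X) \<le> card (\<Union>(N`(Z\<union>X)))" using less.prems(3) by blast
        also have "\<Union>(N`(Z\<union>X)) = \<Union>(N2`Z) \<union> R" by (auto simp: N2_def R_def)
        also have "card \<dots> \<le> card (\<Union>(N2`Z)) + card R" by (rule card_Un_le)
        finally have "card (Z \<union> X) \<le> card (\<Union>(N2`Z)) + card R" .
        moreover have "card (Z \<union> X) = card Z + card X" using Z fin fX by (subst card_Un_disjoint) auto
        moreover have "card R \<le> card X" using X(4) R_def by simp
        ultimately show "card Z \<le> card (\<Union>(N2`Z))" by linarith
      qed
      obtain f2 where f2: "inj_on f2 (A-X)" "\<forall>a\<in>A-X. f2 a \<in> N2 a"
        using less.hyps[OF lt2, of N2] cond2 less.prems by (auto simp: N2_def)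
      define f where "f = (\<lambda>a. if a \<in> X then f1 a else f2 a)"
      have "inj_on f A"
      proof (rule inj_onI)
        fix a b assume ab: "a \<in> A" "b \<in> A" "f a = f b"
        show "a = b"
        proof (cases "a \<in> X"; cases "b \<in> X")
          assume "a \<in> X" "b \<in> X" thus ?thesis using ab f1 by (auto simp: f_def inj_on_def)
        next
          assume "a \<notin> X" "b \<notin> X" thus ?thesis using ab f2 by (auto simp: f_def inj_on_def)
        next
          assume h: "a \<in> X" "b \<notin> X"
          have "f1 a \<in> R" using f1 h R_def by blast
          moreover have "f2 b \<notin> R" using f2 h ab(2) by (auto simp: N2_def)
          moreover have "f2 b = f1 a" using ab h by (simp add: f_def)
          ultimately show ?thesis by simp
        next
          assume h: "a \<notin> X" "b \<in> X"
          have "f1 b \<in> R" using f1 h R_def by blast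
          moreover have "f2 a \<notin> R" using f2 h ab(1) by (auto simp: N2_def)
          moreover have "f2 a = f1 b" using ab h by (simp add: f_def)
          ultimately show ?thesis by simp
        qed
      qed
      moreover have "\<forall>a\<in>A. f a \<in> N a" using f1 f2 by (auto simp: f_def N2_def)
      ultimately show ?thesis by blast
    next
      case False2: False
      obtain a where a: "a \<in> A" using False by blast
      have "{a} \<subseteq> A" using a by auto
      hence "card {a} \<le> card (\<Union>(N`{a}))" using less.prems(3) by blast
      hence "card {a} \<le> card (N a)" by simp
      hence "N a \<noteq> {}" using less.prems(2) a by auto
      then obtain b where b: "b \<in> N a" by blast
      define A0 where "A0 = A - {a}"
      define N0 where "N0 = (\<lambda>x. N x - {b})"
      have lt: "card A0 < card A" unfolding A0_def by (rule card_Diff1_less[OF less.prems(1) a])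
      have cond: "\<forall>Z\<subseteq>A0. card Z \<le> card (\<Union>(N0`Z))"
      proof (intro allI impI)
        fix Z assume Z: "Z \<subseteq> A0"
        show "card Z \<le> card (\<Union>(N0`Z))"
        proof (cases "Z = {}")
          case True thus ?thesis by simp
        next
          case False
          have "Z \<subseteq> A" "Z \<noteq> A" using Z a by (auto simp: A0_def)
          hence "card Z < card (\<Union>(N`Z))" using False2 False by auto
          moreover have "\<Union>(N0`Z) = \<Union>(N`Z) - {b}" by (auto simp: N0_def)
          moreover have "card (\<Union>(N`Z)) - 1 \<le> card (\<Union>(N`Z) - {b})"
            by (metis card_Diff_singleton_if diff_le_self order_refl)
          ultimately show ?thesis by simp
        qed
      qed
      obtain f0 where f0: "inj_on f0 A0" "\<forall>x\<in>A0. f0 x \<in> N0 x"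
        using less.hyps[OF lt, of N0] cond less.prems by (auto simp: N0_def A0_def)
      define f where "f = f0(a := b)"
      have "inj_on f A"
        using f0 unfolding f_def inj_on_def A0_def N0_def by auto
      moreover have "\<forall>x\<in>A. f x \<in> N x" using f0 b by (auto simp: f_def A0_def N0_def)
      ultimately show ?thesis by blast
    qed
  qed
qed

lemma hall_defect:
  assumes fA: "finite A" and fN: "\<forall>a\<in>A. finite (N a)"
    and cond: "\<forall>X\<subseteq>A. card X \<le> card (\<Union>(N ` X)) + k"
  shows "\<exists>A' f. A' \<subseteq> A \<and> card A \<le> card A' + k \<and> inj_on f A' \<and> (\<forall>a\<in>A'. f a \<in> N a)"
proof -
  define N' where "N' = (\<lambda>a. Inl ` N a \<union> Inr ` {..<k} :: ('b + nat) set)"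
  have "\<forall>X\<subseteq>A. card X \<le> card (\<Union>(N' ` X))"
  proof (intro allI impI)
    fix X assume X: "X \<subseteq> A"
    show "card X \<le> card (\<Union>(N' ` X))"
    proof (cases "X = {}")
      case True thus ?thesis by simp
    next
      case False
      have fU: "finite (\<Union>(N ` X))" using X fA fN finite_subset by blast
      have "\<Union>(N' ` X) = Inl ` (\<Union>(N ` X)) \<union> Inr ` {..<k}" using False by (auto simp: N'_def)
      also have "card \<dots> = card (\<Union>(N ` X)) + k"
        using fU by (subst card_Un_disjoint) (auto simp: card_image)
      finally show ?thesis using cond X by simp
    qed
  qed
  moreover have "\<forall>a\<in>A. finite (N' a)" using fN by (auto simp: N'_def)
  ultimately obtain g where g: "inj_on g A" "\<forall>a\<in>A. g a \<in> N' a" using hall[OF fA] by blast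
  define A' where "A' = {a\<in>A. isl (g a)}"
  have "g ` (A - A') \<subseteq> Inr ` {..<k}" using g by (auto simp: A'_def N'_def)
  hence "card (A - A') \<le> card (Inr ` {..<k} :: ('b + nat) set)"
    using g(1) by (intro card_inj_on_le[where f = g]) (auto intro: inj_on_subset)
  hence c1: "card (A - A') \<le> k" by (simp add: card_image)
  have "card A = card A' + card (A - A')"
    using fA by (metis A'_def card_Diff_subset card_mono diff_add_inverse le_add_diff_inverse mem_Collect_eq subsetI finite_subset)
  hence "card A \<le> card A' + k" using c1 by linarith
  moreover have "inj_on (projl \<circ> g) A'"
    using g unfolding A'_def inj_on_def by (metis (mono_tags, lifting) comp_apply isl_def mem_Collect_eq sum.sel(1))
  moreover have "\<forall>a\<in>A'. (projl \<circ> g) a \<in> N a"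
    using g by (auto simp: A'_def N'_def)
  moreover have "A' \<subseteq> A" by (auto simp: A'_def)
  ultimately show ?thesis by blast
qed

definition gsgn :: "'a set \<Rightarrow> 'a set \<Rightarrow> int" where
  "gsgn T e = (if e \<subseteq> T \<or> e \<inter> T = {} then 1 else -1)"

definition flip_set :: "'a \<Rightarrow> 'a set \<Rightarrow> 'a set" where
  "flip_set u T = (if u \<in> T then T - {u} else insert u T)"

lemma flip_set_bij:
  assumes "u \<in> V"
  shows "bij_betw (flip_set u) (Pow V) (Pow V)"
proof (rule bij_betw_byWitness[where f' = "flip_set u"])
  show "\<forall>a\<in>Pow V. flip_set u (flip_set u a) = a" by (auto simp: flip_set_def insert_absorb)
  show "\<forall>a\<in>Pow V. flip_set u (flip_set u a) = a" by (auto simp: flip_set_def insert_absorb)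
  show "flip_set u ` Pow V \<subseteq> Pow V" using assms by (auto simp: flip_set_def)
  show "flip_set u ` Pow V \<subseteq> Pow V" using assms by (auto simp: flip_set_def)
qed

lemma sum_flip_zero:
  fixes h :: "'a set \<Rightarrow> int"
  assumes "finite V" "u \<in> V" "\<And>T. T \<subseteq> V \<Longrightarrow> h (flip_set u T) = - h T"
  shows "(\<Sum>T\<in>Pow V. h T) = 0"
proof -
  have "(\<Sum>T\<in>Pow V. h T) = (\<Sum>T\<in>Pow V. h (flip_set u T))"
    using sum.reindex_bij_betw[OF flip_set_bij[OF assms(2)], of h] by simp
  also have "\<dots> = - (\<Sum>T\<in>Pow V. h T)"
    using assms(3) by (simp add: sum_negf)
  finally show ?thesis by simp
qed

lemma gsgn_flip_in:
  assumes "card e = 2" "u \<in> e"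
  shows "gsgn (flip_set u T) e = - gsgn T e"
proof -
  obtain a b where ab: "e = {a,b}" "a \<noteq> b" using assms(1) by (meson card_2_iff)
  show ?thesis using assms(2) ab by (auto simp: gsgn_def flip_set_def)
qed

lemma gsgn_flip_out:
  assumes "u \<notin> e"
  shows "gsgn (flip_set u T) e = gsgn T e"
proof -
  have "e \<subseteq> flip_set u T \<longleftrightarrow> e \<subseteq> T" "e \<inter> flip_set u T = {} \<longleftrightarrow> e \<inter> T = {}"
    using assms by (auto simp: flip_set_def)
  thus ?thesis by (simp add: gsgn_def)
qed

lemma gsgn_sq: "gsgn T e * gsgn T e = 1" by (simp add: gsgn_def)

lemma var_sum:
  assumes fV: "finite V" and fF: "finite F" and F: "\<forall>e\<in>F. e \<subseteq> V \<and> card e = 2"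
  shows "(\<Sum>T\<in>Pow V. (\<Sum>e\<in>F. gsgn T e)^2) = int (card F) * 2 ^ card V"
proof -
  have "(\<Sum>T\<in>Pow V. (\<Sum>e\<in>F. gsgn T e)^2) = (\<Sum>T\<in>Pow V. \<Sum>e\<in>F. \<Sum>e'\<in>F. gsgn T e * gsgn T e')"
    by (simp add: power2_eq_square sum_product)
  also have "\<dots> = (\<Sum>e\<in>F. \<Sum>e'\<in>F. \<Sum>T\<in>Pow V. gsgn T e * gsgn T e')"
    by (simp add: sum.swap[of _ "Pow V"] sum.swap[of _ "Pow V" F])
  also have "\<dots> = (\<Sum>e\<in>F. \<Sum>e'\<in>F. if e = e' then 2 ^ card V else 0)"
  proof (intro sum.cong refl)
    fix e e' assume e: "e \<in> F" and e': "e' \<in> F"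
    show "(\<Sum>T\<in>Pow V. gsgn T e * gsgn T e') = (if e = e' then 2 ^ card V else 0)"
    proof (cases "e = e'")
      case True thus ?thesis using fV by (simp add: gsgn_sq card_Pow)
    next
      case False
      have "\<not> e \<subseteq> e'"
        using False F e e' by (metis card_subset_eq finite_subset card.infinite zero_neq_numeral)
      then obtain u where u: "u \<in> e" "u \<notin> e'" by blast
      have "(\<Sum>T\<in>Pow V. gsgn T e * gsgn T e') = 0"
        apply (rule sum_flip_zero[OF fV, of u])
        using u F e apply blast
        using gsgn_flip_in[of e u] gsgn_flip_out[OF u(2)] u F e by simp
      thus ?thesis using False by simp
    qed
  qed
  also have "\<dots> = (\<Sum>e\<in>F. 2 ^ card V)"
    using fF by (simp add: sum.delta)
  also have "\<dots> = int (card F) * 2 ^ card V" by simp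
  finally show ?thesis .
qed

lemma good_partition:
  assumes fV: "finite V" and fE: "finite E" and E: "\<forall>e\<in>E. e \<subseteq> V \<and> card e = 2"
    and reg: "\<forall>v\<in>V. card {e\<in>E. v \<in> e} = d"
  shows "\<exists>T\<subseteq>V. (\<Sum>v\<in>V. (\<Sum>e\<in>{e\<in>E. v \<in> e}. gsgn T e)^2) \<le> int (card V) * int d"
proof (rule ccontr)
  assume "\<not> ?thesis"
  hence lt: "\<forall>T\<in>Pow V. int (card V) * int d < (\<Sum>v\<in>V. (\<Sum>e\<in>{e\<in>E. v \<in> e}. gsgn T e)^2)" by auto
  have "(\<Sum>T\<in>Pow V. int (card V) * int d) < (\<Sum>T\<in>Pow V. \<Sum>v\<in>V. (\<Sum>e\<in>{e\<in>E. v \<in> e}. gsgn T e)^2)"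
    using lt fV by (intro sum_strict_mono) auto
  also have "\<dots> = (\<Sum>v\<in>V. \<Sum>T\<in>Pow V. (\<Sum>e\<in>{e\<in>E. v \<in> e}. gsgn T e)^2)" by (rule sum.swap)
  also have "\<dots> = (\<Sum>v\<in>V. int d * 2 ^ card V)"
    using reg fE E by (intro sum.cong refl) (subst var_sum[OF fV], auto)
  finally show False using fV by (simp add: card_Pow)
qed

lemma cross_count:
  assumes E: "\<forall>e\<in>E. e \<subseteq> V \<and> card e = 2" and fE: "finite E"
    and X: "X \<subseteq> A" and Y: "Y \<subseteq> V - A" and fV: "finite V" and AV: "A \<subseteq> V"
  shows "(\<Sum>x\<in>X. card {e\<in>E. x \<in> e \<and> gsgn A e = -1})
          \<le> card {e\<in>E. e \<inter> X \<noteq> {} \<and> e \<inter> (V - A - Y) \<noteq> {}} + (\<Sum>y\<in>Y. card {e\<in>E. y \<in> e \<and> gsgn A e = -1})"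
proof -
  let ?cr = "\<lambda>v. {e\<in>E. v \<in> e \<and> gsgn A e = -1}"
  let ?F = "{e\<in>E. e \<inter> X \<noteq> {} \<and> e \<inter> (V - A - Y) \<noteq> {}}"
  have "X \<subseteq> V" "Y \<subseteq> V" using X Y AV by auto
  hence fX: "finite X" "finite Y" using fV finite_subset by auto
  have disj: "\<forall>x\<in>X. \<forall>x'\<in>X. x \<noteq> x' \<longrightarrow> ?cr x \<inter> ?cr x' = {}"
  proof (intro ballI impI)
    fix x x' assume xx: "x \<in> X" "x' \<in> X" "x \<noteq> x'"
    show "?cr x \<inter> ?cr x' = {}"
    proof (rule ccontr)
      assume "?cr x \<inter> ?cr x' \<noteq> {}"
      then obtain e where e: "e \<in> E" "x \<in> e" "x' \<in> e" "gsgn A e = -1" by auto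
      obtain a b where ab: "e = {a,b}" "a \<noteq> b" using E e(1) by (meson card_2_iff)
      have "e = {x, x'}" using ab e(2,3) xx(3) by auto
      hence "e \<subseteq> A" using xx(1,2) X by auto
      hence "gsgn A e = 1" by (simp add: gsgn_def)
      thus False using e(4) by simp
    qed
  qed
  have eq1: "(\<Sum>x\<in>X. card (?cr x)) = card (\<Union>x\<in>X. ?cr x)"
    using fX fE disj by (subst card_UN_disjoint) auto
  have "(\<Union>x\<in>X. ?cr x) \<subseteq> ?F \<union> (\<Union>y\<in>Y. ?cr y)"
  proof
    fix e assume "e \<in> (\<Union>x\<in>X. ?cr x)"
    then obtain x where x: "x \<in> X" "e \<in> E" "x \<in> e" "gsgn A e = -1" by auto
    then obtain b where b: "b \<in> e" "b \<notin> A" by (auto simp: gsgn_def split: if_splits)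
    have "b \<in> V" using E x b by auto
    show "e \<in> ?F \<union> (\<Union>y\<in>Y. ?cr y)"
    proof (cases "b \<in> Y")
      case True thus ?thesis using x b by auto
    next
      case False thus ?thesis using x b \<open>b \<in> V\<close> by auto
    qed
  qed
  moreover have "finite (?F \<union> (\<Union>y\<in>Y. ?cr y))" by (rule finite_subset[OF _ fE]) auto
  ultimately have "card (\<Union>x\<in>X. ?cr x) \<le> card (?F \<union> (\<Union>y\<in>Y. ?cr y))"
    by (intro card_mono)
  also have "\<dots> \<le> card ?F + card (\<Union>y\<in>Y. ?cr y)" by (rule card_Un_le)
  also have "card (\<Union>y\<in>Y. ?cr y) \<le> (\<Sum>y\<in>Y. card (?cr y))" by (rule card_UN_le[OF fX(2)])
  finally show ?thesis using eq1 by simp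
qed

lemma dev_eq:
  assumes "finite S"
  shows "(\<Sum>e\<in>S. gsgn A e) = int (card S) - 2 * int (card {e\<in>S. gsgn A e = -1})"
proof -
  let ?P = "{e\<in>S. gsgn A e = -1}" and ?Q = "{e\<in>S. gsgn A e \<noteq> -1}"
  have fP: "finite ?P" "finite ?Q" using assms by auto
  have "(\<Sum>e\<in>S. gsgn A e) = (\<Sum>e\<in>?P \<union> ?Q. gsgn A e)"
    by (intro sum.cong refl) auto
  also have "\<dots> = (\<Sum>e\<in>?P. gsgn A e) + (\<Sum>e\<in>?Q. gsgn A e)"
    using fP by (intro sum.union_disjoint) auto
  also have "(\<Sum>e\<in>?P. gsgn A e) = (\<Sum>e\<in>?P. -1)" by (intro sum.cong refl) auto
  also have "(\<Sum>e\<in>?Q. gsgn A e) = (\<Sum>e\<in>?Q. 1)" proof (intro sum.cong refl)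
    fix e assume "e \<in> ?Q" thus "gsgn A e = 1" unfolding gsgn_def by (simp split: if_splits)
  qed
  finally have h: "(\<Sum>e\<in>S. gsgn A e) = - int (card ?P) + int (card ?Q)" by simp
  have "card S = card (?P \<union> ?Q)" by (intro arg_cong[where f=card]) auto
  also have "\<dots> = card ?P + card ?Q" using fP by (intro card_Un_disjoint) auto
  finally show ?thesis using h by simp
qed

lemma abs_le_sq: "a > 0 \<Longrightarrow> \<bar>t::real\<bar> \<le> t^2 / (2*a) + a/2"
proof -
  assume a: "a > 0"
  have "0 \<le> (\<bar>t\<bar> - a)^2" by simp
  also have "(\<bar>t\<bar> - a)^2 = t^2 - 2*a*\<bar>t\<bar> + a^2"
    by (simp add: power2_eq_square algebra_simps abs_mult_self_eq)
  finally have h: "2*a*\<bar>t\<bar> \<le> t^2 + a^2" by simp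
  have "\<bar>t\<bar> = (2*a*\<bar>t\<bar>) / (2*a)" using a by simp
  also have "\<dots> \<le> (t^2 + a^2) / (2*a)" using h a by (intro divide_right_mono) auto
  also have "\<dots> = t^2 / (2*a) + a/2" using a by (simp add: add_divide_distrib power2_eq_square)
  finally show ?thesis .
qed

lemma prob_none_kept:
  assumes fE: "finite E" and FE: "F \<subseteq> E" and p: "0 \<le> p" "p \<le> 1"
  shows "measure_pmf.prob (random_subgraph E p) {keep. \<forall>e\<in>F. \<not> keep e} = (1-p)^card F"
proof -
  have "{keep. \<forall>e\<in>F. \<not> keep e} = Pi E (\<lambda>e. if e \<in> F then {False} else UNIV)"
    using FE by (auto simp: Pi_def)
  hence "measure_pmf.prob (random_subgraph E p) {keep. \<forall>e\<in>F. \<not> keep e}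
      = (\<Prod>e\<in>E. measure_pmf.prob (bernoulli_pmf p) (if e \<in> F then {False} else UNIV))"
    unfolding random_subgraph_def using fE by (simp add: measure_Pi_pmf_Pi)
  also have "\<dots> = (\<Prod>e\<in>E. if e \<in> F then 1 - p else 1)"
    using p by (intro prod.cong refl) (simp add: measure_pmf_single)
  also have "\<dots> = (1-p) ^ card (E \<inter> F)"
    using fE by (simp add: prod.If_cases Int_def)
  also have "E \<inter> F = F" using FE by auto
  finally show ?thesis .
qed

lemma pow_le_exp:
  assumes "0 \<le> p" "p \<le> 1"
  shows "(1-p)^m \<le> exp (- p * real m)"
proof -
  have "1 - p \<le> exp (-p)" using exp_ge_add_one_self[of "-p"] by simp
  hence "(1-p)^m \<le> exp (-p)^m" using assms by (intro power_mono) auto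
  also have "\<dots> = exp (- p * real m)" by (simp add: exp_of_nat_mult[symmetric] mult.commute)
  finally show ?thesis .
qed

lemma F_card_bound:
  fixes eps :: real
  assumes E: "\<forall>e\<in>E. e \<subseteq> {..<n} \<and> card e = 2" and fE: "finite E"
    and reg: "\<forall>v\<in>{..<n}. card {e\<in>E. v \<in> e} = d"
    and AV: "A \<subseteq> {..<n}"
    and dev: "(\<Sum>v\<in>{..<n}. (\<Sum>e\<in>{e\<in>E. v \<in> e}. gsgn A e)^2) \<le> int n * int d"
    and X: "X \<subseteq> A" and Y: "Y \<subseteq> {..<n} - A"
    and XY: "real (card Y) + eps * real n / 2 < real (card X)"
    and eps: "eps > 0" and d: "real d \<ge> 16 / eps^2"
  shows "real (card {e\<in>E. e \<inter> X \<noteq> {} \<and> e \<inter> ({..<n} - A - Y) \<noteq> {}}) \<ge> real d * eps * real n / 8"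
proof -
  define V where "V = {..<n::nat}"
  define F where "F = {e\<in>E. e \<inter> X \<noteq> {} \<and> e \<inter> (V - A - Y) \<noteq> {}}"
  define cr where "cr = (\<lambda>v. card {e\<in>E. v \<in> e \<and> gsgn A e = -1})"
  define dv where "dv = (\<lambda>v. real_of_int (\<Sum>e\<in>{e\<in>E. v \<in> e}. gsgn A e))"
  have fV: "finite V" by (simp add: V_def)
  have dpos: "real d > 0" using d eps by (smt (verit) divide_pos_pos zero_less_power)
  have E': "\<forall>e\<in>E. e \<subseteq> V \<and> card e = 2" using E by (simp add: V_def)
  have Y': "Y \<subseteq> V - A" and AV': "A \<subseteq> V" using Y AV by (simp_all add: V_def)
  have cc: "(\<Sum>x\<in>X. cr x) \<le> card F + (\<Sum>y\<in>Y. cr y)"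
    unfolding cr_def F_def by (rule cross_count[OF E' fE X Y' fV AV'])
  have crv: "2 * real (cr v) = real d - dv v" if "v \<in> V" for v
  proof -
    have "(\<Sum>e\<in>{e\<in>E. v \<in> e}. gsgn A e) = int (card {e\<in>E. v \<in> e}) - 2 * int (card {e\<in>{e\<in>E. v \<in> e}. gsgn A e = -1})"
      using fE by (intro dev_eq) auto
    moreover have "{e\<in>{e\<in>E. v \<in> e}. gsgn A e = -1} = {e\<in>E. v \<in> e \<and> gsgn A e = -1}" by auto
    ultimately have i: "(\<Sum>e\<in>{e\<in>E. v \<in> e}. gsgn A e) = int d - 2 * int (cr v)"
      using reg that by (simp add: cr_def V_def)
    have "dv v = real_of_int (int d - 2 * int (cr v))" unfolding dv_def using i by (rule arg_cong)
    thus ?thesis by simp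
  qed
  have XV: "X \<subseteq> V" "Y \<subseteq> V" using X Y AV by (auto simp: V_def)
  have fX: "finite X" "finite Y" using finite_subset[OF _ fV] XV by auto
  have disj: "X \<inter> Y = {}" using X Y by auto
  have "2 * (\<Sum>x\<in>X. real (cr x)) \<le> 2 * real (card F) + 2 * (\<Sum>y\<in>Y. real (cr y))"
    using cc by (simp flip: of_nat_sum)
  hence "(\<Sum>x\<in>X. 2 * real (cr x)) \<le> 2 * real (card F) + (\<Sum>y\<in>Y. 2 * real (cr y))"
    by (simp add: sum_distrib_left)
  also have "(\<Sum>x\<in>X. 2 * real (cr x)) = (\<Sum>x\<in>X. real d - dv x)"
    using XV crv by (intro sum.cong) auto
  also have "(\<Sum>y\<in>Y. 2 * real (cr y)) = (\<Sum>y\<in>Y. real d - dv y)"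
    using XV crv by (intro sum.cong) auto
  finally have h1: "real d * card X - (\<Sum>x\<in>X. dv x) \<le> 2 * real (card F) + real d * card Y - (\<Sum>y\<in>Y. dv y)"
    by (simp add: sum_subtractf algebra_simps)
  have m1: "(\<Sum>y\<in>Y. dv y) - (\<Sum>x\<in>X. dv x) \<ge> - (\<Sum>v\<in>X \<union> Y. \<bar>dv v\<bar>)"
  proof -
    have "- (\<Sum>x\<in>X. dv x) \<ge> - (\<Sum>x\<in>X. \<bar>dv x\<bar>)" by (simp add: sum_mono)
    moreover have "(\<Sum>y\<in>Y. dv y) \<ge> - (\<Sum>y\<in>Y. \<bar>dv y\<bar>)"
      by (simp add: sum_negf[symmetric] sum_mono)
    moreover have "(\<Sum>v\<in>X \<union> Y. \<bar>dv v\<bar>) = (\<Sum>x\<in>X. \<bar>dv x\<bar>) + (\<Sum>y\<in>Y. \<bar>dv y\<bar>)"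
      using fX disj by (simp add: sum.union_disjoint)
    ultimately show ?thesis by linarith
  qed
  have m2: "(\<Sum>v\<in>X \<union> Y. \<bar>dv v\<bar>) \<le> (\<Sum>v\<in>V. \<bar>dv v\<bar>)"
    using XV fV by (intro sum_mono2) auto
  define a where "a = eps * real d / 4"
  have apos: "a > 0" using eps dpos by (simp add: a_def)
  have "(\<Sum>v\<in>V. \<bar>dv v\<bar>) \<le> (\<Sum>v\<in>V. (dv v)^2 / (2*a) + a/2)"
    using abs_le_sq[OF apos] by (intro sum_mono) auto
  also have "\<dots> = (\<Sum>v\<in>V. (dv v)^2) / (2*a) + real n * a / 2"
    by (simp add: sum.distrib sum_divide_distrib V_def)
  also have "(\<Sum>v\<in>V. (dv v)^2) \<le> real n * real d"
  proof -
    have "(\<Sum>v\<in>V. (dv v)^2) = real_of_int (\<Sum>v\<in>{..<n}. (\<Sum>e\<in>{e\<in>E. v \<in> e}. gsgn A e)^2)"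
      by (simp add: dv_def V_def)
    also have "\<dots> \<le> real_of_int (int n * int d)" using dev by (simp only: of_int_le_iff)
    finally show ?thesis by simp
  qed
  hence "(\<Sum>v\<in>V. (dv v)^2) / (2*a) + real n * a / 2 \<le> real n * real d / (2*a) + real n * a / 2"
    using apos by (simp add: divide_right_mono)
  finally have h3: "(\<Sum>v\<in>V. \<bar>dv v\<bar>) \<le> real n * real d / (2*a) + real n * a / 2" .
  have h2: "2 * real (card F) \<ge> real d * (real (card X) - real (card Y)) - (real n * real d / (2*a) + real n * a / 2)"
    using h1 m1 m2 h3 by (simp add: algebra_simps)
  have e1: "real n * real d / (2*a) = 2 * real n / eps" using dpos eps by (simp add: a_def field_simps)
  have e2: "real n * a / 2 = real d * eps * real n / 8" by (simp add: a_def)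
  have "2 * real n / eps \<le> real d * eps * real n / 8"
  proof -
    have "16 \<le> real d * eps^2" using d eps by (simp add: field_simps)
    hence "16 * real n \<le> real d * eps^2 * real n" by (intro mult_right_mono) auto
    thus ?thesis using eps by (simp add: field_simps power2_eq_square)
  qed
  moreover have "real d * (real (card X) - real (card Y)) \<ge> real d * (eps * real n / 2)"
    using XY dpos by (intro mult_left_mono) auto
  moreover have "2 * real (card F) \<ge> real d * (real (card X) - real (card Y)) - (2 * real n / eps + real d * eps * real n / 8)"
    using h2 unfolding e1 e2 .
  ultimately have "2 * real (card F) \<ge> real d * eps * real n / 4"
    by linarith
  thus ?thesis by (simp add: F_def V_def)
qed

lemma four_pow_le: "(4::real) ^ n \<le> exp (2 * real n)"
proof -
  have "(2::real) \<le> exp 1" using exp_ge_add_one_self[of 1] by simp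
  hence "(4::real) \<le> exp 1 * exp 1" using mult_mono[of "2::real" "exp 1" "2" "exp 1"] by simp
  hence "(4::real) \<le> exp 2" by (simp flip: exp_add)
  hence "(4::real) ^ n \<le> exp 2 ^ n" by (intro power_mono) auto
  also have "exp 2 ^ n = exp (2 * real n)" by (simp flip: exp_of_nat_mult add: mult.commute)
  finally show ?thesis .
qed

lemma main_bound:
  fixes eps p :: real
  assumes eps: "eps > 0" and reg: "regular_graph n d E" and p: "0 \<le> p" "p \<le> 1"
    and d: "real d \<ge> 16/eps^2" and pd: "p * real d * eps / 8 \<ge> 3"
  shows "prob_large_matching n E p eps \<ge> 1 - exp (- real n)"
proof -
  from reg have E: "\<forall>e\<in>E. e \<subseteq> {..<n} \<and> card e = 2" and degs: "\<forall>v\<in>{..<n}. card {e\<in>E. v \<in> e} = d"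
    by (auto simp: regular_graph_def simple_graph_def)
  have fE: "finite E"
    by (rule finite_subset[of _ "Pow {..<n}"]) (use E in auto)
  obtain T where T: "T \<subseteq> {..<n}" "(\<Sum>v\<in>{..<n}. (\<Sum>e\<in>{e\<in>E. v \<in> e}. gsgn T e)^2) \<le> int n * int d"
    using good_partition[of "{..<n}" E d] E degs fE by auto
  define A where "A = (if n \<le> 2 * card T then T else {..<n} - T)"
  have AV: "A \<subseteq> {..<n}" using T by (auto simp: A_def)
  have fA: "finite A" using AV finite_subset by blast
  have cardA: "n \<le> 2 * card A"
  proof (cases "n \<le> 2 * card T")
    case True thus ?thesis by (simp add: A_def)
  next
    case False
    have "card ({..<n} - T) = n - card T" using T by (simp add: card_Diff_subset finite_subset)
    thus ?thesis using False by (simp add: A_def)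
  qed
  have gsA: "gsgn A e = gsgn T e" if "e \<in> E" for e
  proof (cases "n \<le> 2 * card T")
    case True thus ?thesis by (simp add: A_def)
  next
    case False
    have eV: "e \<subseteq> {..<n}" using E that by auto
    have "e \<subseteq> {..<n} - T \<longleftrightarrow> e \<inter> T = {}" using eV by auto
    moreover have "e \<inter> ({..<n} - T) = {} \<longleftrightarrow> e \<subseteq> T" using eV by auto
    ultimately show ?thesis using False by (auto simp: A_def gsgn_def)
  qed
  have devA: "(\<Sum>v\<in>{..<n}. (\<Sum>e\<in>{e\<in>E. v \<in> e}. gsgn A e)^2) \<le> int n * int d"
  proof -
    have "(\<Sum>v\<in>{..<n}. (\<Sum>e\<in>{e\<in>E. v \<in> e}. gsgn A e)^2) = (\<Sum>v\<in>{..<n}. (\<Sum>e\<in>{e\<in>E. v \<in> e}. gsgn T e)^2)"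
      using gsA by (intro sum.cong refl arg_cong[where f="\<lambda>x. x^2"]) auto
    thus ?thesis using T(2) by simp
  qed
  define B where "B = {..<n} - A"
  define k where "k = nat \<lfloor>eps * real n / 2\<rfloor>"
  have "0 \<le> \<lfloor>eps * real n / 2\<rfloor>" using eps by simp
  hence k0: "real k = real_of_int \<lfloor>eps * real n / 2\<rfloor>" by (simp add: k_def)
  have k1: "real k \<le> eps * real n / 2" unfolding k0 by (rule of_int_floor_le)
  have k2: "eps * real n / 2 < real k + 1" unfolding k0 by (rule real_of_int_floor_add_one_gt)
  define Fs where "Fs = (\<lambda>X Y. {e\<in>E. e \<inter> X \<noteq> {} \<and> e \<inter> (B - Y) \<noteq> {}})"
  define Ev where "Ev = (\<lambda>(X,Y). if X \<subseteq> A \<and> Y \<subseteq> B \<and> card Y + k < card X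
                                   then {keep. \<forall>e\<in>Fs X Y. \<not> keep e} else {})"
  define I where "I = Pow {..<n} \<times> Pow {..<n::nat}"
  define Bad where "Bad = (\<Union>XY\<in>I. Ev XY)"
  define Good where "Good = {keep. \<exists>M. is_matching {e\<in>E. keep e} M \<and> real (card (\<Union>M)) \<ge> (1 - eps) * real n}"
  have sub: "UNIV - Bad \<subseteq> Good"
  proof
    fix keep assume "keep \<in> UNIV - Bad"
    hence nb: "keep \<notin> Bad" by simp
    define N where "N = (\<lambda>a. {b\<in>B. {a,b} \<in> E \<and> keep {a,b}})"
    show "keep \<in> Good"
    proof (cases "\<forall>X\<subseteq>A. card X \<le> card (\<Union>(N`X)) + k")
      case True
      have fN: "\<forall>a\<in>A. finite (N a)"
      proof
        fix a assume "a \<in> A"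
        have "N a \<subseteq> {..<n}" by (auto simp: N_def B_def)
        thus "finite (N a)" by (rule finite_subset) simp
      qed
      obtain A' f where hf: "A' \<subseteq> A" "card A \<le> card A' + k" "inj_on f A'" "\<forall>a\<in>A'. f a \<in> N a"
        using hall_defect[OF fA fN True] by blast
      define M where "M = (\<lambda>a. {a, f a}) ` A'"
      have fB: "\<forall>a\<in>A'. f a \<in> B" using hf(4) by (auto simp: N_def)
      have mat: "is_matching {e\<in>E. keep e} M"
        unfolding is_matching_def
      proof (intro conjI ballI impI)
        show "M \<subseteq> {e\<in>E. keep e}" using hf(4) by (auto simp: M_def N_def)
      next
        fix e g assume eg: "e \<in> M" "g \<in> M" "e \<noteq> g"
        then obtain a a' where aa: "a \<in> A'" "a' \<in> A'" "e = {a, f a}" "g = {a', f a'}" by (auto simp: M_def)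
        have "a \<noteq> a'" using aa eg by auto
        hence "f a \<noteq> f a'" using hf(3) aa by (auto simp: inj_on_def)
        moreover have "a \<in> A" "a' \<in> A" using aa hf(1) by auto
        moreover have "f a \<in> B" "f a' \<in> B" using fB aa by auto
        ultimately show "e \<inter> g = {}" using aa \<open>a \<noteq> a'\<close> by (auto simp: B_def)
      qed
      have UM: "\<Union>M = A' \<union> f ` A'" by (auto simp: M_def)
      have fA': "finite A'" using hf(1) fA finite_subset by blast
      have "card (\<Union>M) = card A' + card (f ` A')"
        unfolding UM using fA' fB hf(1) by (intro card_Un_disjoint) (auto simp: B_def)
      also have "card (f ` A') = card A'" using hf(3) by (simp add: card_image)
      finally have "real (card (\<Union>M)) = 2 * real (card A')" by simp
      moreover have "real (card A) \<le> real (card A') + real k" using hf(2) by linarith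
      moreover have "real n \<le> 2 * real (card A)" using cardA by linarith
      ultimately have "real (card (\<Union>M)) \<ge> (1 - eps) * real n" using k1 by (simp add: algebra_simps)
      thus ?thesis using mat by (auto simp: Good_def)
    next
      case False
      then obtain X where X: "X \<subseteq> A" "card (\<Union>(N`X)) + k < card X" by auto
      define Y where "Y = \<Union>(N`X)"
      have YB: "Y \<subseteq> B" by (auto simp: Y_def N_def)
      have none: "\<forall>e\<in>Fs X Y. \<not> keep e"
      proof (intro ballI notI)
        fix e assume e: "e \<in> Fs X Y" and ke: "keep e"
        then obtain x b where xb: "e \<in> E" "x \<in> e" "x \<in> X" "b \<in> e" "b \<in> B" "b \<notin> Y"
          by (auto simp: Fs_def)
        have "x \<noteq> b" using xb X by (auto simp: B_def)
        obtain u w where uw: "e = {u,w}" "u \<noteq> w" using E xb(1) by (meson card_2_iff)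
        have ee: "e = {x,b}" using uw xb(2,4) \<open>x \<noteq> b\<close> by auto
        hence "b \<in> N x" using xb ke by (auto simp: N_def)
        hence "b \<in> Y" using xb(3) by (auto simp: Y_def)
        thus False using xb by simp
      qed
      have "keep \<in> Ev (X,Y)" using X YB none by (simp add: Ev_def Y_def)
      moreover have "(X,Y) \<in> I" using X YB AV by (auto simp: I_def B_def)
      ultimately have "keep \<in> Bad" by (auto simp: Bad_def)
      thus ?thesis using nb by simp
    qed
  qed
  let ?P = "random_subgraph E p"
  have evb: "measure_pmf.prob ?P (Ev XY) \<le> exp (- 3 * real n)" if "XY \<in> I" for XY
  proof -
    obtain X Y where XY: "XY = (X,Y)" by fastforce
    show ?thesis
    proof (cases "X \<subseteq> A \<and> Y \<subseteq> B \<and> card Y + k < card X")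
      case False
      hence "Ev XY = {}" unfolding Ev_def XY by auto
      thus ?thesis by simp
    next
      case True
      have FE: "Fs X Y \<subseteq> E" by (auto simp: Fs_def)
      have "real (card Y) + eps * real n / 2 < real (card X)" using True k2 by linarith
      hence cF: "real (card (Fs X Y)) \<ge> real d * eps * real n / 8"
        using F_card_bound[OF E fE degs AV devA, of X Y] True eps d by (simp add: Fs_def B_def)
      have "measure_pmf.prob ?P (Ev XY) = (1-p) ^ card (Fs X Y)"
        using True prob_none_kept[OF fE FE p] by (simp add: Ev_def XY)
      also have "\<dots> \<le> exp (- p * real (card (Fs X Y)))" by (rule pow_le_exp[OF p])
      also have "\<dots> \<le> exp (- 3 * real n)"
      proof -
        have "p * (real d * eps * real n / 8) \<le> p * real (card (Fs X Y))"
          using cF p by (intro mult_left_mono) auto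
        moreover have "p * (real d * eps * real n / 8) = (p * real d * eps / 8) * real n" by simp
        moreover have "3 * real n \<le> (p * real d * eps / 8) * real n" using pd by (intro mult_right_mono) auto
        ultimately show ?thesis by simp
      qed
      finally show ?thesis .
    qed
  qed
  have fI: "finite I" by (simp add: I_def)
  have "measure_pmf.prob ?P Bad \<le> (\<Sum>XY\<in>I. measure_pmf.prob ?P (Ev XY))"
    unfolding Bad_def using fI by (intro measure_pmf.finite_measure_subadditive_finite) auto
  also have "\<dots> \<le> (\<Sum>XY\<in>I. exp (- 3 * real n))" using evb by (intro sum_mono) auto
  also have "\<dots> = 4 ^ n * exp (- 3 * real n)"
    by (simp add: I_def card_cartesian_product card_Pow power_mult_distrib[symmetric])
  also have "\<dots> \<le> exp (2 * real n) * exp (- 3 * real n)"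
    by (intro mult_right_mono four_pow_le) auto
  also have "\<dots> = exp (- real n)" by (simp flip: exp_add)
  finally have pb: "measure_pmf.prob ?P Bad \<le> exp (- real n)" .
  have "measure_pmf.prob ?P (UNIV - Bad) \<le> measure_pmf.prob ?P Good"
    using sub by (intro measure_pmf.finite_measure_mono) auto
  moreover have "measure_pmf.prob ?P (space (measure_pmf ?P) - Bad) = 1 - measure_pmf.prob ?P Bad"
    by (rule measure_pmf.prob_compl) simp
  hence "measure_pmf.prob ?P (UNIV - Bad) = 1 - measure_pmf.prob ?P Bad" by simp
  ultimately show ?thesis using pb by (simp add: prob_large_matching_def Good_def)
qed


theorem theorem1p1:
  fixes eps :: real
  assumes "eps > 0"
  shows "\<exists>C>0. \<forall>\<delta>>0. \<exists>N. \<forall>n\<ge>N. \<forall>(d::nat) (E::nat set set) (p::real).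
           real d \<ge> C \<and> regular_graph n d E \<and> 0 \<le> p \<and> p \<le> 1 \<and> p \<ge> C / real d
           \<longrightarrow> prob_large_matching n E p eps \<ge> 1 - \<delta>"
proof -
  have eps: "eps > 0" by fact
  define C where "C = 16/eps^2 + 24/eps"
  have a1: "16/eps^2 > 0" "24/eps > 0" using eps by auto
  have Cpos: "C > 0" unfolding C_def using a1 by linarith
  show ?thesis
  proof (intro exI[of _ C] conjI allI impI)
    show "C > 0" by (rule Cpos)
  next
    fix \<delta> :: real assume \<delta>: "\<delta> > 0"
    show "\<exists>N. \<forall>n\<ge>N. \<forall>(d::nat) (E::nat set set) (p::real).
           real d \<ge> C \<and> regular_graph n d E \<and> 0 \<le> p \<and> p \<le> 1 \<and> p \<ge> C / real d
           \<longrightarrow> prob_large_matching n E p eps \<ge> 1 - \<delta>"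
    proof (intro exI[of _ "nat \<lceil>- ln \<delta>\<rceil>"] allI impI)
      fix n d E and p :: real
      assume n: "nat \<lceil>- ln \<delta>\<rceil> \<le> n"
        and h: "real d \<ge> C \<and> regular_graph n d E \<and> 0 \<le> p \<and> p \<le> 1 \<and> p \<ge> C / real d"
      have dC: "real d \<ge> C" and reg: "regular_graph n d E" and p: "0 \<le> p" "p \<le> 1"
        and pC: "p \<ge> C / real d" using h by auto
      have dpos: "real d > 0" using dC Cpos by linarith
      have "real d \<ge> 16/eps^2 + 24/eps" using dC unfolding C_def .
      hence d16: "real d \<ge> 16/eps^2" using a1 by linarith
      have "C \<le> p * real d" using pC dpos by (simp add: pos_divide_le_eq)
      hence "C * eps / 8 \<le> p * real d * eps / 8" using eps by (intro divide_right_mono mult_right_mono) auto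
      moreover have "C * eps / 8 \<ge> 3"
      proof -
        have "C * eps / 8 = 2 / eps + 3" using eps by (simp add: C_def field_simps power2_eq_square)
        thus ?thesis using eps by simp
      qed
      ultimately have pd: "p * real d * eps / 8 \<ge> 3" by linarith
      have mb: "prob_large_matching n E p eps \<ge> 1 - exp (- real n)"
        by (rule main_bound[OF eps reg p d16 pd])
      have "- ln \<delta> \<le> real_of_int \<lceil>- ln \<delta>\<rceil>" by (rule le_of_int_ceiling)
      also have "\<dots> \<le> real (nat \<lceil>- ln \<delta>\<rceil>)" by simp
      also have "\<dots> \<le> real n" using n by simp
      finally have "- real n \<le> ln \<delta>" by simp
      hence "exp (- real n) \<le> exp (ln \<delta>)" by simp
      hence "exp (- real n) \<le> \<delta>" using \<delta> by simp
      thus "prob_large_matching n E p eps \<ge> 1 - \<delta>" using mb by linarith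
    qed
  qed
qed

end
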